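(* There is an absolute constant $C>0$ such that the following holds. Let $G=(V,E)$ be an unweighted graph with maximum vertex degree $d_{\max}$, and let $\{s,t\}\in E$. Then there is a subset $S\subset V$ with $s\in S$, $t\in V\setminus S$, and $$ B_{st}^{2}\leq C\, d_{\max}\,\Theta(S)^{-2}. $$
   Context: For an unweighted graph with $n$ vertices, $L=D-A$ is the graph Laplacian, $L^{+}$ its Moore–Penrose pseudoinverse, $L^{2+}=(L^+)^2$, and $1_v$ the indicator vector of vertex $v$. The biharmonic distance is $B_{st}=\sqrt{(1_s-1_t)^{T}L^{2+}(1_s-1_t)}$. For a nonempty proper subset $S\subset V$, $E(S,V\setminus S)$ is the set of edges with one endpoint in $S$ and one in $V\setminus S$, and the isoperimetric ratio is $\Theta(S)=\frac{n|E(S,V\setminus S)|}{|S||V\setminus S|}$ (the paper states the conclusion as $B_{st}^2\in O(d_{\max}\Theta(S)^{-2})$). *)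

theory Defs
  imports "Jordan_Normal_Form.Matrix"
begin

definition simple_graph :: "nat \<Rightarrow> (nat \<Rightarrow> nat \<Rightarrow> bool) \<Rightarrow> bool" where
  "simple_graph n E \<longleftrightarrow>
     (\<forall>u v. E u v \<longrightarrow> u < n \<and> v < n) \<and>
     (\<forall>u v. E u v \<longrightarrow> E v u) \<and>
     (\<forall>u. \<not> E u u)"

definition degree :: "nat \<Rightarrow> (nat \<Rightarrow> nat \<Rightarrow> bool) \<Rightarrow> nat \<Rightarrow> nat" where
  "degree n E v = card {u \<in> {0..<n}. E v u}"

definition max_degree :: "nat \<Rightarrow> (nat \<Rightarrow> nat \<Rightarrow> bool) \<Rightarrow> nat" where
  "max_degree n E = Max (degree n E ` {0..<n})"

definition laplacian :: "nat \<Rightarrow> (nat \<Rightarrow> nat \<Rightarrow> bool) \<Rightarrow> real mat" where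
  "laplacian n E = mat n n (\<lambda>(i, j).
     if i = j then real (degree n E i) else if E i j then -1 else 0)"

definition pseudo_inverse :: "nat \<Rightarrow> real mat \<Rightarrow> real mat" where
  "pseudo_inverse n A = (THE X. X \<in> carrier_mat n n \<and>
      A * X * A = A \<and> X * A * X = X \<and>
      transpose_mat (A * X) = A * X \<and> transpose_mat (X * A) = X * A)"

definition biharmonic_dist :: "nat \<Rightarrow> (nat \<Rightarrow> nat \<Rightarrow> bool) \<Rightarrow> nat \<Rightarrow> nat \<Rightarrow> real" where
  "biharmonic_dist n E s t =
     (let x = unit_vec n s - unit_vec n t;
          P = pseudo_inverse n (laplacian n E)
      in sqrt (x \<bullet> ((P * P) *\<^sub>v x)))"

text \<open>|E(S, V \ S)|: each crossing edge counted once (oriented from S to V \ S).\<close>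
definition cut_size :: "nat \<Rightarrow> (nat \<Rightarrow> nat \<Rightarrow> bool) \<Rightarrow> nat set \<Rightarrow> nat" where
  "cut_size n E S = card {(u, v). u \<in> S \<and> v \<in> {0..<n} - S \<and> E u v}"

definition iso_ratio :: "nat \<Rightarrow> (nat \<Rightarrow> nat \<Rightarrow> bool) \<Rightarrow> nat set \<Rightarrow> real" where
  "iso_ratio n E S = real n * real (cut_size n E S) / (real (card S) * real (card ({0..<n} - S)))"

end

theory Submission
  imports Defs "Jordan_Normal_Form.Determinant"
begin

lemma my_cs:
  fixes a b :: "'a \<Rightarrow> real"
  shows "(\<Sum>i\<in>I. a i * b i)\<^sup>2 \<le> (\<Sum>i\<in>I. (a i)\<^sup>2) * (\<Sum>i\<in>I. (b i)\<^sup>2)"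
proof (cases "finite I")
  case fin: True
  let ?A = "\<Sum>i\<in>I. (a i)\<^sup>2" and ?B = "\<Sum>i\<in>I. (b i)\<^sup>2" and ?C = "\<Sum>i\<in>I. a i * b i"
  have key: "0 \<le> ?A * x\<^sup>2 - 2 * ?C * x + ?B" for x
  proof -
    have "0 \<le> (\<Sum>i\<in>I. (a i * x - b i)\<^sup>2)" by (simp add: sum_nonneg)
    also have "\<dots> = ?A * x\<^sup>2 - 2 * ?C * x + ?B"
      by (simp add: power2_eq_square algebra_simps sum_distrib_left sum_distrib_right sum.distrib sum_subtractf)
    finally show ?thesis .
  qed
  show ?thesis
  proof (cases "?A = 0")
    case True
    have "\<forall>i\<in>I. (a i)\<^sup>2 = 0" using True fin by (subst sum_nonneg_eq_0_iff[symmetric]) auto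
    then have "?C = 0" by simp
    then show ?thesis by (simp add: sum_nonneg mult_nonneg_nonneg)
  next
    case False
    then have Apos: "?A > 0" by (metis less_eq_real_def sum_nonneg zero_le_power2)
    have "0 \<le> ?A * (?C / ?A)\<^sup>2 - 2 * ?C * (?C / ?A) + ?B" by (rule key)
    also have "\<dots> = ?B - ?C\<^sup>2 / ?A" using Apos by (simp add: power2_eq_square field_simps)
    finally have "?C\<^sup>2 / ?A \<le> ?B" by simp
    then show ?thesis using Apos by (simp add: divide_le_eq mult.commute)
  qed
qed simp

definition Dsum :: "('a \<times> 'a) set \<Rightarrow> ('a \<Rightarrow> real) \<Rightarrow> real" where
  "Dsum Ed f = (\<Sum>p\<in>Ed. max (f (fst p) - f (snd p)) 0)"
definition cutc :: "('a \<times> 'a) set \<Rightarrow> 'a set \<Rightarrow> nat" where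
  "cutc Ed S = card {p\<in>Ed. fst p \<in> S \<and> snd p \<notin> S}"
definition lev :: "'a set \<Rightarrow> ('a \<Rightarrow> real) \<Rightarrow> real \<Rightarrow> 'a set" where
  "lev V f b = {v\<in>V. b \<le> f v}"

lemma decomp:
  assumes fin: "finite V" and Ed: "Ed \<subseteq> V \<times> V" and nn: "\<forall>v\<in>V. 0 \<le> f v"
    and ex: "\<exists>v\<in>V. 0 < f v"
    and a_def: "a = Min {f v | v. v \<in> V \<and> 0 < f v}"
    and f'_def: "f' = (\<lambda>v. if 0 < f v then f v - a else 0)"
  shows "0 < a" "\<forall>v\<in>V. 0 \<le> f' v" "lev V f a \<noteq> {}"
    "Dsum Ed f = a * cutc Ed (lev V f a) + Dsum Ed f'"
    "sum f V = a * card (lev V f a) + sum f' V"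
    "\<And>b. 0 < b \<Longrightarrow> lev V f' b = lev V f (a + b)"
    "card {f' v | v. v \<in> V \<and> 0 < f' v} < card {f v | v. v \<in> V \<and> 0 < f v}"
proof -
  let ?P = "{f v | v. v \<in> V \<and> 0 < f v}"
  have finP: "finite ?P" using fin by simp
  have neP: "?P \<noteq> {}" using ex by auto
  have aP: "a \<in> ?P" unfolding a_def using Min_in[OF finP neP] .
  then show apos: "0 < a" by auto
  have amin: "\<And>v. v \<in> V \<Longrightarrow> 0 < f v \<Longrightarrow> a \<le> f v" unfolding a_def using finP by (intro Min_le) auto
  show "\<forall>v\<in>V. 0 \<le> f' v" using amin by (auto simp: f'_def)
  have levS: "lev V f a = {v\<in>V. 0 < f v}" using amin apos by (auto simp: lev_def)
  show "lev V f a \<noteq> {}" using ex levS by auto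
  have edge: "max (f u - f w) 0 = (if u \<in> lev V f a \<and> w \<notin> lev V f a then a else 0) + max (f' u - f' w) 0"
    if "u \<in> V" "w \<in> V" for u w
  proof -
    have "0 \<le> f u" "0 \<le> f w" using that nn by auto
    moreover have "0 < f u \<Longrightarrow> a \<le> f u" "0 < f w \<Longrightarrow> a \<le> f w" using amin that by auto
    ultimately show ?thesis unfolding levS f'_def using apos that by (auto simp: max_def; linarith)
  qed
  have "Dsum Ed f = (\<Sum>p\<in>Ed. (if fst p \<in> lev V f a \<and> snd p \<notin> lev V f a then a else 0) + max (f' (fst p) - f' (snd p)) 0)"
    unfolding Dsum_def using Ed by (intro sum.cong refl edge) auto
  also have "\<dots> = (\<Sum>p\<in>Ed. (if fst p \<in> lev V f a \<and> snd p \<notin> lev V f a then a else 0)) + Dsum Ed f'"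
    by (simp add: sum.distrib Dsum_def)
  also have "(\<Sum>p\<in>Ed. (if fst p \<in> lev V f a \<and> snd p \<notin> lev V f a then a else 0)) = a * cutc Ed (lev V f a)"
    unfolding cutc_def using finite_subset[OF Ed] fin by (simp add: sum.If_cases Int_def conj_commute)
  finally show "Dsum Ed f = a * cutc Ed (lev V f a) + Dsum Ed f'" .
  have "sum f V = (\<Sum>v\<in>V. (if v \<in> lev V f a then a else 0) + f' v)"
    using nn by (intro sum.cong refl) (auto simp: levS f'_def)
  also have "\<dots> = a * card (lev V f a) + sum f' V"
    using fin by (simp add: sum.distrib sum.If_cases levS Int_def)
  finally show "sum f V = a * card (lev V f a) + sum f' V" .
  show "lev V f' b = lev V f (a + b)" if "0 < b" for b
    using that apos by (auto simp: lev_def f'_def)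
  have "{f' v | v. v \<in> V \<and> 0 < f' v} \<subseteq> (\<lambda>x. x - a) ` (?P - {a})"
    by (auto simp: f'_def)
  then have "card {f' v | v. v \<in> V \<and> 0 < f' v} \<le> card ((\<lambda>x. x - a) ` (?P - {a}))"
    using finP by (intro card_mono) auto
  also have "\<dots> \<le> card (?P - {a})" by (rule card_image_le) (use finP in auto)
  also have "\<dots> < card ?P" by (rule card_Diff1_less[OF finP aP])
  finally show "card {f' v | v. v \<in> V \<and> 0 < f' v} < card ?P" .
qed

lemma layer_nonstrict:
  fixes h :: real
  assumes fin: "finite V" and Ed: "Ed \<subseteq> V \<times> V"
  shows "(\<forall>v\<in>V. 0 \<le> f v) \<Longrightarrow> (\<forall>b>0. h * card (lev V f b) \<le> cutc Ed (lev V f b))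
     \<Longrightarrow> h * sum f V \<le> Dsum Ed f"
proof (induction "card {f v | v. v \<in> V \<and> 0 < f v}" arbitrary: f rule: less_induct)
  case less
  show ?case
  proof (cases "\<exists>v\<in>V. 0 < f v")
    case False
    then have "sum f V = 0" using less.prems by (intro sum.neutral) force
    moreover have "0 \<le> Dsum Ed f" unfolding Dsum_def by (intro sum_nonneg) auto
    ultimately show ?thesis by simp
  next
    case True
    define a where "a = Min {f v | v. v \<in> V \<and> 0 < f v}"
    define f' where "f' = (\<lambda>v. if 0 < f v then f v - a else 0)"
    note d = decomp[OF fin Ed less.prems(1) True a_def f'_def]
        have "h * sum f' V \<le> Dsum Ed f'"
    proof (rule less.hyps[OF d(7) d(2)], intro allI impI)
      fix b :: real assume "0 < b"
      then show "h * card (lev V f' b) \<le> cutc Ed (lev V f' b)"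
        using d(6)[of b] less.prems(2) d(1) by (metis add_pos_pos)
    qed
    moreover have "h * card (lev V f a) \<le> cutc Ed (lev V f a)" using less.prems(2) d(1) by blast
    then have "a * (h * card (lev V f a)) \<le> a * cutc Ed (lev V f a)" using d(1) by (intro mult_left_mono) auto
    ultimately show ?thesis unfolding d(4) d(5) by (simp add: algebra_simps)
  qed
qed

lemma layer_strict:
  fixes h :: real
  assumes fin: "finite V" and Ed: "Ed \<subseteq> V \<times> V" and nn: "\<forall>v\<in>V. 0 \<le> f v"
    and ex: "\<exists>v\<in>V. 0 < f v"
    and hyp: "\<forall>b>0. lev V f b \<noteq> {} \<longrightarrow> h * card (lev V f b) < cutc Ed (lev V f b)"
  shows "h * sum f V < Dsum Ed f"
proof -
  define a where "a = Min {f v | v. v \<in> V \<and> 0 < f v}"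
  define f' where "f' = (\<lambda>v. if 0 < f v then f v - a else 0)"
  note d = decomp[OF fin Ed nn ex a_def f'_def]
  have "h * sum f' V \<le> Dsum Ed f'"
  proof (rule layer_nonstrict[OF fin Ed d(2)], intro allI impI)
    fix b :: real assume b: "0 < b"
    show "h * card (lev V f' b) \<le> cutc Ed (lev V f' b)"
    proof (cases "lev V f' b = {}")
      case True then show ?thesis by simp
    next
      case False
      then show ?thesis using d(6)[OF b] hyp d(1) b by (metis add_pos_pos less_imp_le)
    qed
  qed
  moreover have "h * card (lev V f a) < cutc Ed (lev V f a)" using hyp d(1) d(3) by blast
  then have "a * (h * card (lev V f a)) < a * cutc Ed (lev V f a)" using d(1) by (intro mult_strict_left_mono) auto
  ultimately show ?thesis unfolding d(4) d(5) by (simp add: algebra_simps)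
qed

definition edges :: "nat \<Rightarrow> (nat \<Rightarrow> nat \<Rightarrow> bool) \<Rightarrow> (nat \<times> nat) set" where
  "edges n E = {(u, v). u < n \<and> v < n \<and> E u v}"

lemma edges_Sigma: "edges n E = Sigma {0..<n} (\<lambda>u. {v\<in>{0..<n}. E u v})"
  by (auto simp: edges_def)

lemma edges_sub: "edges n E \<subseteq> {0..<n} \<times> {0..<n}" by (auto simp: edges_def)

lemma finite_edges: "finite (edges n E)" using edges_sub by (rule finite_subset) auto

lemma sum_edges_fst:
  fixes g :: "nat \<Rightarrow> real"
  shows "(\<Sum>p\<in>edges n E. g (fst p)) = (\<Sum>u\<in>{0..<n}. real (Defs.degree n E u) * g u)"
proof -
  have "(\<Sum>u\<in>{0..<n}. real (Defs.degree n E u) * g u) = (\<Sum>u\<in>{0..<n}. \<Sum>v\<in>{v\<in>{0..<n}. E u v}. g u)"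
    by (simp add: Defs.degree_def)
  also have "\<dots> = (\<Sum>p\<in>edges n E. g (fst p))"
    unfolding edges_Sigma by (subst sum.Sigma) (auto simp: case_prod_beta)
  finally show ?thesis by simp
qed

lemma sum_edges_swap:
  assumes sg: "simple_graph n E"
  shows "(\<Sum>p\<in>edges n E. g (fst p) (snd p)) = (\<Sum>p\<in>edges n E. g (snd p) (fst p))"
proof -
  have "edges n E = prod.swap ` edges n E" using sg unfolding simple_graph_def edges_def by auto
  then have "(\<Sum>p\<in>edges n E. g (fst p) (snd p)) = (\<Sum>p\<in>prod.swap ` edges n E. g (fst p) (snd p))" by simp
  also have "\<dots> = (\<Sum>p\<in>edges n E. g (snd p) (fst p))" by (subst sum.reindex) auto
  finally show ?thesis .
qed

lemma degree_le_max: "u < n \<Longrightarrow> Defs.degree n E u \<le> max_degree n E"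
  unfolding max_degree_def by (intro Max_ge) auto

lemma cut_eq: "S \<subseteq> {0..<n} \<Longrightarrow> cut_size n E S = cutc (edges n E) S"
  unfolding cut_size_def cutc_def edges_def
  by (intro arg_cong[where f = card]) auto

lemma one_side:
  fixes y :: "nat \<Rightarrow> real" and m :: real
  assumes sg: "simple_graph n E" and Est: "E s t"
    and H1: "\<forall>v\<in>{0..<n}. y t \<le> y v \<and> y v \<le> y s"
    and H2: "(\<Sum>p\<in>edges n E. (y (fst p) - y (snd p))\<^sup>2) \<le> 2"
    and mt: "y t \<le> m" and half: "2 * card {v\<in>{0..<n}. m < y v} \<le> n"
    and pos: "0 < (\<Sum>v\<in>{0..<n}. (max (y v - m) 0)\<^sup>2)"
  shows "\<exists>S\<subseteq>{0..<n}. s \<in> S \<and> t \<notin> S \<and>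
           (iso_ratio n E S)\<^sup>2 * (\<Sum>v\<in>{0..<n}. (max (y v - m) 0)\<^sup>2) \<le> 32 * real (max_degree n E)"
proof -
  let ?V = "{0..<n}" and ?Ed = "edges n E"
  define g where "g = (\<lambda>v. max (y v - m) 0)"
  define f where "f = (\<lambda>v. (g v)\<^sup>2)"
  define F where "F = sum f ?V"
  define D where "D = Dsum ?Ed f"
  define h where "h = D / F"
  define d where "d = real (max_degree n E)"
  have Fpos: "0 < F" using pos unfolding F_def f_def g_def .
  have st: "s < n" "t < n" using sg Est unfolding simple_graph_def by auto
  have gnn: "0 \<le> g v" for v unfolding g_def by simp
  have fnn: "\<forall>v\<in>?V. 0 \<le> f v" unfolding f_def by simp
  have exb: "\<exists>b>0. lev ?V f b \<noteq> {} \<and> cutc ?Ed (lev ?V f b) \<le> h * card (lev ?V f b)"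
  proof (rule ccontr)
    assume "\<not> ?thesis"
    then have hyp: "\<forall>b>0. lev ?V f b \<noteq> {} \<longrightarrow> h * card (lev ?V f b) < cutc ?Ed (lev ?V f b)"
      by (auto simp: not_le)
    have ex: "\<exists>v\<in>?V. 0 < f v"
    proof (rule ccontr)
      assume "\<not> ?thesis"
      then have "F = 0" unfolding F_def using fnn by (intro sum.neutral) force
      then show False using Fpos by simp
    qed
    have "h * F < D" unfolding F_def D_def by (rule layer_strict[OF _ edges_sub fnn ex hyp]) simp
    then show False using Fpos unfolding h_def by simp
  qed
  then obtain b where b: "0 < b" and Sne: "lev ?V f b \<noteq> {}"
    and cutb: "cutc ?Ed (lev ?V f b) \<le> h * card (lev ?V f b)" by blast
  define S where "S = lev ?V f b"
  have SV: "S \<subseteq> ?V" unfolding S_def lev_def by auto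
  have inS: "v \<in> S \<longleftrightarrow> v < n \<and> b \<le> f v" for v unfolding S_def lev_def by auto
  have Sgt: "m < y v" if "v \<in> S" for v
  proof -
    have "0 < f v" using that b inS by auto
    then have "g v \<noteq> 0" unfolding f_def by auto
    then show ?thesis unfolding g_def by (auto simp: max_def split: if_splits)
  qed
  obtain w where w: "w \<in> S" using Sne S_def by auto
  have "y w \<le> y s" using H1 w inS by auto
  then have "g w \<le> g s" unfolding g_def by (auto simp: max_def)
  then have "f w \<le> f s" unfolding f_def using gnn by (simp add: power_mono)
  then have sS: "s \<in> S" using w inS st by auto
  have "g t = 0" using mt unfolding g_def by simp
  then have tS: "t \<notin> S" using inS b unfolding f_def by auto
  have "S \<subseteq> {v\<in>?V. m < y v}" using SV Sgt by auto
  then have "card S \<le> card {v\<in>?V. m < y v}" by (intro card_mono) auto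
  then have half2: "2 * card S \<le> n" using half by linarith
  define k where "k = card S"
  define c where "c = cutc ?Ed S"
  have kpos: "1 \<le> k" unfolding k_def using sS SV by (metis One_nat_def Suc_leI card_gt_0_iff finite_atLeastLessThan finite_subset empty_iff)
  have cardc: "card (?V - S) = n - k" unfolding k_def using SV by (simp add: card_Diff_subset finite_subset)
  have iso: "iso_ratio n E S = real n * real c / (real k * real (n - k))"
    unfolding iso_ratio_def cut_eq[OF SV] c_def k_def[symmetric] cardc by simp
  have nk: "real (n - k) \<ge> real n / 2" using half2 unfolding k_def by linarith
  have nkpos: "real (n - k) > 0" using half2 kpos unfolding k_def by linarith
  have iso_le: "iso_ratio n E S \<le> 2 * real c / real k"
  proof -
    have "real n * real c / (real k * real (n - k)) \<le> 2 * real c / real k"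
      using kpos nkpos nk by (simp add: divide_simps) (simp add: mult.commute mult.left_commute mult_left_mono)
    then show ?thesis using iso by simp
  qed
  have iso_nn: "0 \<le> iso_ratio n E S" unfolding iso_ratio_def by simp
  have ch: "real c \<le> h * real k" using cutb unfolding c_def k_def S_def .
  have iso_h: "iso_ratio n E S \<le> 2 * h"
  proof -
    have "2 * real c / real k \<le> 2 * h" using ch kpos by (simp add: divide_simps mult.commute)
    then show ?thesis using iso_le by linarith
  qed
  have Dnn: "0 \<le> D" unfolding D_def Dsum_def by (intro sum_nonneg) auto
  have trm: "max (f u - f v) 0 \<le> \<bar>g u - g v\<bar> * (g u + g v)" for u v
  proof -
    have "f u - f v = (g u - g v) * (g u + g v)" unfolding f_def by (simp add: power2_eq_square algebra_simps)
    also have "\<dots> \<le> \<bar>g u - g v\<bar> * (g u + g v)" using gnn[of u] gnn[of v] by (intro mult_right_mono) auto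
    finally show ?thesis using gnn[of u] gnn[of v] by simp
  qed
  have D1: "D \<le> (\<Sum>p\<in>?Ed. \<bar>g (fst p) - g (snd p)\<bar> * (g (fst p) + g (snd p)))"
    unfolding D_def Dsum_def by (intro sum_mono trm)
  have A2: "(\<Sum>p\<in>?Ed. \<bar>g (fst p) - g (snd p)\<bar>\<^sup>2) \<le> 2"
  proof -
    have "(\<Sum>p\<in>?Ed. \<bar>g (fst p) - g (snd p)\<bar>\<^sup>2) \<le> (\<Sum>p\<in>?Ed. (y (fst p) - y (snd p))\<^sup>2)"
    proof (intro sum_mono)
      fix p
      have "\<bar>g (fst p) - g (snd p)\<bar> \<le> \<bar>y (fst p) - y (snd p)\<bar>" unfolding g_def by (auto simp: max_def)
      then show "\<bar>g (fst p) - g (snd p)\<bar>\<^sup>2 \<le> (y (fst p) - y (snd p))\<^sup>2"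
        by (metis abs_ge_zero power2_abs power_mono)
    qed
    then show ?thesis using H2 by linarith
  qed
  have B2: "(\<Sum>p\<in>?Ed. (g (fst p) + g (snd p))\<^sup>2) \<le> 4 * d * F"
  proof -
    have "(\<Sum>p\<in>?Ed. (g (fst p) + g (snd p))\<^sup>2) \<le> (\<Sum>p\<in>?Ed. 2 * (g (fst p))\<^sup>2 + 2 * (g (snd p))\<^sup>2)"
    proof (intro sum_mono)
      fix p
      have "0 \<le> (g (fst p) - g (snd p))\<^sup>2" by simp
      then show "(g (fst p) + g (snd p))\<^sup>2 \<le> 2 * (g (fst p))\<^sup>2 + 2 * (g (snd p))\<^sup>2"
        by (simp add: power2_eq_square algebra_simps)
    qed
    also have "\<dots> = 2 * (\<Sum>p\<in>?Ed. (g (fst p))\<^sup>2) + 2 * (\<Sum>p\<in>?Ed. (g (snd p))\<^sup>2)"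
      by (simp add: sum.distrib sum_distrib_left)
    also have "(\<Sum>p\<in>?Ed. (g (snd p))\<^sup>2) = (\<Sum>p\<in>?Ed. (g (fst p))\<^sup>2)"
      using sum_edges_swap[OF sg, of "\<lambda>a b. (g b)\<^sup>2"] by simp
    also have "(\<Sum>p\<in>?Ed. (g (fst p))\<^sup>2) = (\<Sum>u\<in>?V. real (Defs.degree n E u) * (g u)\<^sup>2)"
      by (rule sum_edges_fst)
    also have "\<dots> \<le> (\<Sum>u\<in>?V. d * (g u)\<^sup>2)"
      using degree_le_max unfolding d_def by (intro sum_mono mult_right_mono) auto
    also have "\<dots> = d * F" unfolding F_def f_def by (simp add: sum_distrib_left)
    finally show ?thesis by (simp add: mult.commute mult.left_commute)
  qed
  have D2: "D\<^sup>2 \<le> 8 * d * F"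
  proof -
    have "D\<^sup>2 \<le> (\<Sum>p\<in>?Ed. \<bar>g (fst p) - g (snd p)\<bar> * (g (fst p) + g (snd p)))\<^sup>2"
      using D1 Dnn by (simp add: power_mono)
    also have "\<dots> \<le> (\<Sum>p\<in>?Ed. \<bar>g (fst p) - g (snd p)\<bar>\<^sup>2) * (\<Sum>p\<in>?Ed. (g (fst p) + g (snd p))\<^sup>2)"
      by (rule my_cs)
    also have "\<dots> \<le> 2 * (4 * d * F)"
      using A2 B2 by (intro mult_mono) (auto simp: sum_nonneg)
    finally show ?thesis by simp
  qed
  have "(iso_ratio n E S)\<^sup>2 \<le> (2 * h)\<^sup>2" using iso_h iso_nn by (intro power_mono) auto
  also have "\<dots> = 4 * D\<^sup>2 / F\<^sup>2" unfolding h_def by (simp add: power2_eq_square)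
  finally have "(iso_ratio n E S)\<^sup>2 * F \<le> 4 * D\<^sup>2 / F\<^sup>2 * F" using Fpos by (intro mult_right_mono) auto
  also have "\<dots> = 4 * D\<^sup>2 / F" using Fpos by (simp add: power2_eq_square)
  also have "\<dots> \<le> 4 * (8 * d * F) / F" using D2 Fpos by (intro divide_right_mono) (auto simp: mult.commute mult.left_commute)
  also have "\<dots> = 32 * d" using Fpos by simp
  finally show ?thesis using SV sS tS unfolding F_def f_def g_def d_def by blast
qed

lemma median_exists:
  fixes y :: "'a \<Rightarrow> real"
  assumes fin: "finite V" and ne: "V \<noteq> {}"
  shows "\<exists>m\<in>y ` V. 2 * card {v\<in>V. m < y v} \<le> card V \<and> 2 * card {v\<in>V. y v < m} \<le> card V"
proof -
  define A where "A = {a\<in>y ` V. card V \<le> 2 * card {v\<in>V. a \<le> y v}}"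
  have finA: "finite A" unfolding A_def using fin by simp
  have "Min (y ` V) \<in> A"
  proof -
    have "{v\<in>V. Min (y ` V) \<le> y v} = V" using fin by auto
    then show ?thesis unfolding A_def using fin ne by auto
  qed
  then have neA: "A \<noteq> {}" by auto
  define m where "m = Max A"
  have mA: "m \<in> A" unfolding m_def using finA neA by simp
  have 1: "2 * card {v\<in>V. m < y v} \<le> card V"
  proof (cases "{v\<in>V. m < y v} = {}")
    case True then show ?thesis by (subst True) simp
  next
    case False
    define a' where "a' = Min (y ` {v\<in>V. m < y v})"
    have a'in: "a' \<in> y ` {v\<in>V. m < y v}" unfolding a'_def using fin False by (intro Min_in) auto
    then have "m < a'" by auto
    have eq: "{v\<in>V. a' \<le> y v} = {v\<in>V. m < y v}"
    proof
      show "{v\<in>V. a' \<le> y v} \<subseteq> {v\<in>V. m < y v}" using \<open>m < a'\<close> by auto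
      show "{v\<in>V. m < y v} \<subseteq> {v\<in>V. a' \<le> y v}" unfolding a'_def using fin by (auto intro: Min_le)
    qed
    have "a' \<notin> A"
    proof
      assume "a' \<in> A"
      then have "a' \<le> m" unfolding m_def using finA by simp
      then show False using \<open>m < a'\<close> by simp
    qed
    moreover have "a' \<in> y ` V" using a'in by auto
    ultimately have "\<not> card V \<le> 2 * card {v\<in>V. a' \<le> y v}" unfolding A_def by auto
    then show ?thesis using eq by simp
  qed
  have 2: "2 * card {v\<in>V. y v < m} \<le> card V"
  proof -
    have "V = {v\<in>V. y v < m} \<union> {v\<in>V. m \<le> y v}" by auto
    then have "card V = card {v\<in>V. y v < m} + card {v\<in>V. m \<le> y v}"
      by (subst card_Un_disjoint[symmetric]) (use fin in auto)
    moreover have "card V \<le> 2 * card {v\<in>V. m \<le> y v}" using mA unfolding A_def by auto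
    ultimately show ?thesis by linarith
  qed
  show ?thesis using mA 1 2 unfolding A_def by auto
qed

lemma iso_pos:
  assumes sg: "simple_graph n E" and Est: "E s t" and SV: "S \<subseteq> {0..<n}" and sS: "s \<in> S" and tS: "t \<notin> S"
  shows "0 < iso_ratio n E S"
proof -
  have st: "s < n" "t < n" using sg Est unfolding simple_graph_def by auto
  have "(s, t) \<in> {(u, v). u \<in> S \<and> v \<in> {0..<n} - S \<and> E u v}" using sS tS st Est by auto
  moreover have "finite {(u, v). u \<in> S \<and> v \<in> {0..<n} - S \<and> E u v}"
    by (rule finite_subset[of _ "{0..<n} \<times> {0..<n}"]) (use SV in auto)
  ultimately have c: "0 < cut_size n E S" unfolding cut_size_def by (auto simp: card_gt_0_iff)
  have k: "0 < card S" using sS SV by (auto simp: card_gt_0_iff intro: finite_subset)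
  have k2: "0 < card ({0..<n} - S)" using tS st by (auto simp: card_gt_0_iff)
  have "0 < n" using st by auto
  then show ?thesis unfolding iso_ratio_def using c k k2 by simp
qed

lemma iso_compl:
  assumes sg: "simple_graph n E" and SV: "S \<subseteq> {0..<n}"
  shows "iso_ratio n E ({0..<n} - S) = iso_ratio n E S"
proof -
  have "cut_size n E ({0..<n} - S) = card (prod.swap ` {(u, v). u \<in> S \<and> v \<in> {0..<n} - S \<and> E u v})"
    unfolding cut_size_def
    using sg SV unfolding simple_graph_def by (intro arg_cong[where f = card]) auto
  also have "\<dots> = cut_size n E S" unfolding cut_size_def by (rule card_image) simp
  finally have c: "cut_size n E ({0..<n} - S) = cut_size n E S" .
  have "{0..<n} - ({0..<n} - S) = S" using SV by auto
  then show ?thesis unfolding iso_ratio_def c by (simp add: mult.commute)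
qed

lemma analytic_main:
  fixes y :: "nat \<Rightarrow> real"
  assumes sg: "simple_graph n E" and Est: "E s t"
    and H1: "\<forall>v\<in>{0..<n}. y t \<le> y v \<and> y v \<le> y s"
    and H2: "(\<Sum>p\<in>edges n E. (y (fst p) - y (snd p))\<^sup>2) \<le> 2"
    and H3: "(\<Sum>v\<in>{0..<n}. y v) = 0"
  shows "\<exists>S\<subseteq>{0..<n}. s \<in> S \<and> t \<notin> S \<and>
           (\<Sum>v\<in>{0..<n}. (y v)\<^sup>2) \<le> 64 * real (max_degree n E) / (iso_ratio n E S)\<^sup>2"
proof -
  let ?V = "{0..<n}"
  define d where "d = real (max_degree n E)"
  define Y where "Y = (\<Sum>v\<in>?V. (y v)\<^sup>2)"
  have st: "s < n" "t < n" using sg Est unfolding simple_graph_def by auto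
  have sneqt: "s \<noteq> t" using sg Est unfolding simple_graph_def by auto
  obtain m where mV: "m \<in> y ` ?V" and h1: "2 * card {v\<in>?V. m < y v} \<le> n"
    and h2: "2 * card {v\<in>?V. y v < m} \<le> n"
    using median_exists[of ?V y] st by auto
  have mt: "y t \<le> m" "m \<le> y s" using mV H1 by auto
  define G where "G = (\<Sum>v\<in>?V. (max (y v - m) 0)\<^sup>2)"
  define H where "H = (\<Sum>v\<in>?V. (max (m - y v) 0)\<^sup>2)"
  have "G + H = (\<Sum>v\<in>?V. (y v - m)\<^sup>2)"
  proof -
    have "(max (y v - m) 0)\<^sup>2 + (max (m - y v) 0)\<^sup>2 = (y v - m)\<^sup>2" for v
    proof (cases "m \<le> y v")
      case True
      then have "max (y v - m) 0 = y v - m" "max (m - y v) 0 = 0" by auto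
      then show ?thesis by simp
    next
      case False
      then have "max (y v - m) 0 = 0" "max (m - y v) 0 = m - y v" by auto
      then show ?thesis by (simp add: power2_commute)
    qed
    then show ?thesis unfolding G_def H_def sum.distrib[symmetric] by simp
  qed
  also have "\<dots> = (\<Sum>v\<in>?V. (y v)\<^sup>2 + m\<^sup>2 - 2 * m * y v)"
    by (intro sum.cong refl) (simp add: power2_diff mult.commute mult.left_commute)
  also have "\<dots> = Y - 2 * m * (\<Sum>v\<in>?V. y v) + real n * m\<^sup>2"
    unfolding Y_def by (simp add: sum.distrib sum_subtractf sum_distrib_left)
  finally have GH: "Y \<le> G + H" using H3 by simp
  have dnn: "0 \<le> d" unfolding d_def by simp
  show ?thesis
  proof (cases "Y = 0")
    case True
    have "{s} \<subseteq> ?V" "s \<in> {s}" "t \<notin> {s}" using st sneqt by auto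
    moreover have "Y \<le> 64 * d / (iso_ratio n E {s})\<^sup>2" using dnn True by simp
    ultimately show ?thesis unfolding Y_def d_def by (intro exI[of _ "{s}"]) simp
  next
    case False
    have Ynn: "0 \<le> Y" unfolding Y_def by (simp add: sum_nonneg)
    then have Ypos: "0 < Y" using False by linarith
    show ?thesis
    proof (cases "Y \<le> 2 * G")
      case True
      have "0 < G" using True Ypos by linarith
      then obtain S where SV: "S \<subseteq> ?V" and sS: "s \<in> S" and tS: "t \<notin> S"
        and b: "(iso_ratio n E S)\<^sup>2 * G \<le> 32 * d"
        using one_side[OF sg Est H1 H2 mt(1) h1] unfolding G_def d_def by blast
      have ip: "0 < (iso_ratio n E S)\<^sup>2" using iso_pos[OF sg Est SV sS tS] by simp
      have "G \<le> 32 * d / (iso_ratio n E S)\<^sup>2" using b ip by (simp add: field_simps)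
      then have "Y \<le> 64 * d / (iso_ratio n E S)\<^sup>2" using True by simp
      then show ?thesis using SV sS tS unfolding Y_def d_def by blast
    next
      case False
      then have YH: "Y \<le> 2 * H" using GH by simp
      have "0 < H" using YH Ypos by linarith
      let ?z = "\<lambda>v. - y v"
      have H1': "\<forall>v\<in>?V. ?z s \<le> ?z v \<and> ?z v \<le> ?z t" using H1 by auto
      have H2': "(\<Sum>p\<in>edges n E. (?z (fst p) - ?z (snd p))\<^sup>2) \<le> 2"
      proof -
        have "(?z a - ?z b)\<^sup>2 = (y a - y b)\<^sup>2" for a b by (simp add: power2_eq_square algebra_simps)
        then show ?thesis using H2 by presburger
      qed
      have mt': "?z s \<le> - m" using mt by simp
      have h1': "2 * card {v\<in>?V. - m < ?z v} \<le> n" using h2 by simp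
      have Heq: "(\<Sum>v\<in>?V. (max (?z v - - m) 0)\<^sup>2) = H" unfolding H_def by simp
      have Hpos: "0 < (\<Sum>v\<in>?V. (max (?z v - - m) 0)\<^sup>2)" using \<open>0 < H\<close> Heq by simp
      have Et: "E t s" using sg Est unfolding simple_graph_def by auto
      obtain S' where SV: "S' \<subseteq> ?V" and sS: "t \<in> S'" and tS: "s \<notin> S'"
        and b: "(iso_ratio n E S')\<^sup>2 * H \<le> 32 * d"
        using one_side[OF sg Et H1' H2' mt' h1' Hpos] unfolding Heq d_def by blast
      define S where "S = ?V - S'"
      have SV2: "S \<subseteq> ?V" "s \<in> S" "t \<notin> S" using SV sS tS st unfolding S_def by auto
      have isoeq: "iso_ratio n E S = iso_ratio n E S'" unfolding S_def by (rule iso_compl[OF sg SV])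
      have ip: "0 < (iso_ratio n E S)\<^sup>2" using iso_pos[OF sg Est SV2] by simp
      have "H \<le> 32 * d / (iso_ratio n E S)\<^sup>2" using b ip isoeq by (simp add: field_simps)
      then have "Y \<le> 64 * d / (iso_ratio n E S)\<^sup>2" using YH by simp
      then show ?thesis using SV2 unfolding Y_def d_def by blast
    qed
  qed
qed

lemma mat_eqI_n:
  assumes "A \<in> carrier_mat n n" "B \<in> carrier_mat n n"
    "\<And>i j. i < n \<Longrightarrow> j < n \<Longrightarrow> A $$ (i, j) = B $$ (i, j)"
  shows "A = B"
  using assms by (intro eq_matI) auto

lemma penrose_unique:
  fixes A X Y :: "real mat"
  assumes A: "A \<in> carrier_mat n n" and X: "X \<in> carrier_mat n n" and Y: "Y \<in> carrier_mat n n"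
    and X1: "A * X * A = A" and X2: "X * A * X = X"
    and X3: "transpose_mat (A * X) = A * X" and X4: "transpose_mat (X * A) = X * A"
    and Y1: "A * Y * A = A" and Y2: "Y * A * Y = Y"
    and Y3: "transpose_mat (A * Y) = A * Y" and Y4: "transpose_mat (Y * A) = Y * A"
  shows "X = Y"
proof -
  have AX: "A * X = A * Y"
  proof -
    have "A * X = transpose_mat (A * X)" using X3 by simp
    also have "\<dots> = transpose_mat (A * Y * A * X)" using Y1 by simp
    also have "\<dots> = transpose_mat (A * Y * (A * X))"
      using A X Y by (subst assoc_mult_mat[of "A * Y"]) auto
    also have "\<dots> = transpose_mat (A * X) * transpose_mat (A * Y)"
      using A X Y by (subst transpose_mult[of _ n n _ n]) auto
    also have "\<dots> = A * X * (A * Y)" using X3 Y3 by simp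
    also have "\<dots> = A * X * A * Y" by (rule assoc_mult_mat[symmetric]) (use A X Y in auto)
    also have "\<dots> = A * Y" using X1 by simp
    finally show ?thesis .
  qed
  have XA: "X * A = Y * A"
  proof -
    have "X * A = transpose_mat (X * A)" using X4 by simp
    also have "\<dots> = transpose_mat (X * (A * Y * A))" using Y1 by simp
    also have "X * (A * Y * A) = X * A * (Y * A)"
      using A X Y by (simp add: assoc_mult_mat[of X n n A n "Y * A" n])
    also have "transpose_mat \<dots> = transpose_mat (Y * A) * transpose_mat (X * A)"
      using A X Y by (subst transpose_mult[of _ n n _ n]) auto
    also have "\<dots> = Y * A * (X * A)" using X4 Y4 by simp
    also have "\<dots> = Y * (A * X * A)"
      using A X Y by (simp add: assoc_mult_mat[of Y n n A n "X * A" n] assoc_mult_mat[of A n n X n A n])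
    also have "\<dots> = Y * A" using X1 by simp
    finally show ?thesis .
  qed
  have "X = X * A * X" using X2 by simp
  also have "\<dots> = X * (A * X)" by (rule assoc_mult_mat) (use A X in auto)
  also have "\<dots> = X * (A * Y)" using AX by simp
  also have "\<dots> = X * A * Y" by (rule assoc_mult_mat[symmetric]) (use A X Y in auto)
  also have "\<dots> = Y * A * Y" using XA by simp
  also have "\<dots> = Y" using Y2 by simp
  finally show ?thesis .
qed

lemma penrose_constr:
  fixes A P Q :: "real mat"
  assumes A: "A \<in> carrier_mat n n" and P: "P \<in> carrier_mat n n" and Q: "Q \<in> carrier_mat n n"
    and AP: "A * P = 0\<^sub>m n n" and PA: "P * A = 0\<^sub>m n n" and PP: "P * P = P"
    and QL: "Q * (A + P) = 1\<^sub>m n" and QR: "(A + P) * Q = 1\<^sub>m n"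
    and At: "transpose_mat A = A" and Pt: "transpose_mat P = P"
  shows "A * (Q - P) * A = A" "(Q - P) * A * (Q - P) = Q - P"
    "transpose_mat (A * (Q - P)) = A * (Q - P)" "transpose_mat ((Q - P) * A) = (Q - P) * A"
    "A * (Q - P) = 1\<^sub>m n - P" "P * (Q - P) = 0\<^sub>m n n" "transpose_mat (Q - P) = Q - P"
proof -
  have PQ: "P * Q = P"
  proof -
    have "P * Q = P * (A + P) * Q" using A P by (simp add: mult_add_distrib_mat[OF P A P] PA PP)
    also have "\<dots> = P * ((A + P) * Q)" using A P Q by (intro assoc_mult_mat) auto
    also have "\<dots> = P" using QR P by simp
    finally show ?thesis .
  qed
  have QP: "Q * P = P"
  proof -
    have "Q * P = Q * ((A + P) * P)" using A P by (simp add: add_mult_distrib_mat[OF A P P] AP PP)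
    also have "\<dots> = Q * (A + P) * P" using A P Q by (intro assoc_mult_mat[symmetric]) auto
    also have "\<dots> = P" using QL P by simp
    finally show ?thesis .
  qed
  have AQ: "A * Q = 1\<^sub>m n - P"
  proof -
    have "A * Q + P * Q = 1\<^sub>m n" using QR add_mult_distrib_mat[OF A P Q] by simp
    then have e: "A * Q + P = 1\<^sub>m n" using PQ by simp
    show ?thesis
    proof (rule mat_eqI_n[of _ n])
      fix i j assume ij: "i < n" "j < n"
      have "(A * Q + P) $$ (i, j) = 1\<^sub>m n $$ (i, j)" using e by simp
      then show "(A * Q) $$ (i, j) = (1\<^sub>m n - P) $$ (i, j)" using ij A P Q by simp
    qed (use A P Q in auto)
  qed
  have QA: "Q * A = 1\<^sub>m n - P"
  proof -
    have "Q * A + Q * P = 1\<^sub>m n" using QL mult_add_distrib_mat[OF Q A P] by simp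
    then have e: "Q * A + P = 1\<^sub>m n" using QP by simp
    show ?thesis
    proof (rule mat_eqI_n[of _ n])
      fix i j assume ij: "i < n" "j < n"
      have "(Q * A + P) $$ (i, j) = 1\<^sub>m n $$ (i, j)" using e by simp
      then show "(Q * A) $$ (i, j) = (1\<^sub>m n - P) $$ (i, j)" using ij A P Q by simp
    qed (use A P Q in auto)
  qed
  have OP: "1\<^sub>m n - P \<in> carrier_mat n n" using P by (intro minus_carrier_mat) auto
  have AX: "A * (Q - P) = 1\<^sub>m n - P"
    using mult_minus_distrib_mat[OF A Q P] AQ AP
    by (simp add: minus_r_inv_mat) (rule mat_eqI_n[of _ n], use P in auto)
  show "A * (Q - P) = 1\<^sub>m n - P" by (rule AX)
  have XA: "(Q - P) * A = 1\<^sub>m n - P"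
    using minus_mult_distrib_mat[OF Q P A] QA PA
    by simp (rule mat_eqI_n[of _ n], use P in auto)
  have PX: "P * (Q - P) = 0\<^sub>m n n"
    using mult_minus_distrib_mat[OF P Q P] PQ PP
    by simp (rule mat_eqI_n[of _ n], use P in auto)
  show "P * (Q - P) = 0\<^sub>m n n" by (rule PX)
  have tOP: "transpose_mat (1\<^sub>m n - P) = 1\<^sub>m n - P"
    using transpose_minus[OF one_carrier_mat P] Pt by simp
  show "transpose_mat (A * (Q - P)) = A * (Q - P)" using AX tOP by simp
  show "transpose_mat ((Q - P) * A) = (Q - P) * A" using XA tOP by simp
  show "A * (Q - P) * A = A"
    using AX minus_mult_distrib_mat[OF one_carrier_mat P A] PA A
    by simp (rule mat_eqI_n[of _ n], use A in auto)
  show "(Q - P) * A * (Q - P) = Q - P"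
    using XA minus_mult_distrib_mat[OF one_carrier_mat P minus_carrier_mat[OF P, of Q]] PX Q P
    by simp (rule mat_eqI_n[of _ n], use Q P in auto)
  have tQ: "transpose_mat Q = Q"
  proof -
    have "transpose_mat (Q * (A + P)) = transpose_mat (1\<^sub>m n)" using QL by simp
    then have e: "(A + P) * transpose_mat Q = 1\<^sub>m n"
      using transpose_mult[OF Q, of "A + P" n] transpose_add[OF A P] At Pt A P by simp
    have "transpose_mat Q = Q * (A + P) * transpose_mat Q" using QL Q by simp
    also have "\<dots> = Q * ((A + P) * transpose_mat Q)" using A P Q by (intro assoc_mult_mat) auto
    also have "\<dots> = Q" using e Q by simp
    finally show ?thesis .
  qed
  show "transpose_mat (Q - P) = Q - P" using transpose_minus[OF Q P] tQ Pt by simp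
qed

definition ccomp :: "nat \<Rightarrow> (nat \<Rightarrow> nat \<Rightarrow> bool) \<Rightarrow> nat \<Rightarrow> nat set" where
  "ccomp n E r = {u. u < n \<and> E\<^sup>*\<^sup>* r u}"

definition nbr :: "nat \<Rightarrow> (nat \<Rightarrow> nat \<Rightarrow> bool) \<Rightarrow> nat \<Rightarrow> nat set" where
  "nbr n E v = {k\<in>{0..<n}. E v k}"

lemma reach_closed:
  assumes "\<And>a b. a \<in> T \<Longrightarrow> E a b \<Longrightarrow> b \<in> T"
  shows "E\<^sup>*\<^sup>* a b \<Longrightarrow> a \<in> T \<Longrightarrow> b \<in> T"
  by (induction rule: rtranclp_induct) (use assms in auto)

lemma reach_sym:
  assumes sg: "simple_graph n E"
  shows "E\<^sup>*\<^sup>* a b \<Longrightarrow> E\<^sup>*\<^sup>* b a"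
proof (induction rule: rtranclp_induct)
  case base then show ?case by simp
next
  case (step y z)
  have "E z y" using step sg unfolding simple_graph_def by auto
  then show ?case using step by (meson converse_rtranclp_into_rtranclp)
qed

lemma reach_lt:
  assumes sg: "simple_graph n E"
  shows "E\<^sup>*\<^sup>* a b \<Longrightarrow> a < n \<Longrightarrow> b < n"
  by (induction rule: rtranclp_induct) (use sg in \<open>auto simp: simple_graph_def\<close>)

lemma comp_eq:
  assumes sg: "simple_graph n E" and "E\<^sup>*\<^sup>* a b"
  shows "ccomp n E a = ccomp n E b"
  using assms reach_sym[OF sg] unfolding ccomp_def
  by (auto intro: rtranclp_trans)

lemma comp_fin: "finite (ccomp n E r)" unfolding ccomp_def by auto

lemma comp_self: "r < n \<Longrightarrow> r \<in> ccomp n E r" unfolding ccomp_def by auto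

lemma comp_card: "r < n \<Longrightarrow> 0 < card (ccomp n E r)"
  using comp_self comp_fin by (metis card_gt_0_iff empty_iff)

lemma comp_E: "simple_graph n E \<Longrightarrow> u \<in> ccomp n E r \<Longrightarrow> E u w \<Longrightarrow> w \<in> ccomp n E r"
  unfolding ccomp_def simple_graph_def by (auto intro: rtranclp.rtrancl_into_rtrancl)

lemma harm_max:
  fixes y :: "nat \<Rightarrow> real"
  assumes sg: "simple_graph n E" and r: "r < n" and sK: "s \<in> ccomp n E r"
    and sub: "\<forall>v\<in>ccomp n E r. v \<noteq> s \<longrightarrow> (\<Sum>k\<in>nbr n E v. y v - y k) \<le> 0"
  shows "\<forall>v\<in>ccomp n E r. y v \<le> y s"
proof (rule ccontr)
  let ?K = "ccomp n E r"
  assume "\<not> ?thesis"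
  then obtain v0 where v0: "v0 \<in> ?K" "y s < y v0" by auto
  define M where "M = Max (y ` ?K)"
  define T where "T = {v\<in>?K. y v = M}"
  have Mge: "\<And>v. v \<in> ?K \<Longrightarrow> y v \<le> M" unfolding M_def using comp_fin by auto
  have "M \<in> y ` ?K" unfolding M_def using comp_fin v0 by (intro Max_in) auto
  then obtain w0 where w0: "w0 \<in> T" unfolding T_def by auto
  have sT: "s \<notin> T" using Mge[OF v0(1)] v0(2) unfolding T_def by auto
  have closed: "b \<in> T" if a: "a \<in> T" and ab: "E a b" for a b
  proof -
    have aK: "a \<in> ?K" and ya: "y a = M" using a unfolding T_def by auto
    have bK: "b \<in> ?K" using comp_E[OF sg aK ab] .
    have as: "a \<noteq> s" using a sT by auto
    have nn: "\<forall>k\<in>nbr n E a. 0 \<le> y a - y k"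
      using Mge comp_E[OF sg aK] ya unfolding nbr_def by auto
    have le: "(\<Sum>k\<in>nbr n E a. y a - y k) \<le> 0" using sub aK as by auto
    have "(\<Sum>k\<in>nbr n E a. y a - y k) = 0" using le nn by (meson antisym sum_nonneg)
    then have "\<forall>k\<in>nbr n E a. y a - y k = 0" using nn by (subst sum_nonneg_eq_0_iff[symmetric]) (auto simp: nbr_def)
    moreover have "b \<in> nbr n E a" using bK ab unfolding nbr_def ccomp_def by auto
    ultimately have "y b = M" using ya by auto
    then show ?thesis using bK unfolding T_def by auto
  qed
  have "E\<^sup>*\<^sup>* w0 s"
  proof -
    have "E\<^sup>*\<^sup>* r w0" "E\<^sup>*\<^sup>* r s" using w0 sK unfolding T_def ccomp_def by auto
    then show ?thesis using reach_sym[OF sg] by (meson rtranclp_trans)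
  qed
  then have "s \<in> T"
  proof (induction rule: rtranclp_induct)
    case base then show ?case using w0 .
  next
    case (step b c) then show ?case using closed by blast
  qed
  then show False using sT by simp
qed

lemma sum_edges_gen:
  fixes g :: "nat \<Rightarrow> nat \<Rightarrow> real"
  shows "(\<Sum>p\<in>edges n E. g (fst p) (snd p)) = (\<Sum>u\<in>{0..<n}. \<Sum>v\<in>nbr n E u. g u v)"
  unfolding edges_Sigma nbr_def by (subst sum.Sigma) (auto simp: case_prod_beta)

lemma quad_form:
  fixes f :: "nat \<Rightarrow> real"
  assumes sg: "simple_graph n E"
  shows "(\<Sum>i\<in>{0..<n}. f i * (\<Sum>k\<in>nbr n E i. f i - f k)) = (\<Sum>p\<in>edges n E. (f (fst p) - f (snd p))\<^sup>2) / 2"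
proof -
  have "(\<Sum>i\<in>{0..<n}. f i * (\<Sum>k\<in>nbr n E i. f i - f k)) = (\<Sum>p\<in>edges n E. f (fst p) * (f (fst p) - f (snd p)))"
    using sum_edges_gen[of "\<lambda>a b. f a * (f a - f b)" n E] by (simp add: sum_distrib_left)
  moreover have "(\<Sum>p\<in>edges n E. f (fst p) * (f (fst p) - f (snd p))) = (\<Sum>p\<in>edges n E. f (snd p) * (f (snd p) - f (fst p)))"
    using sum_edges_swap[OF sg, of "\<lambda>a b. f a * (f a - f b)"] by simp
  moreover have "(\<Sum>p\<in>edges n E. f (fst p) * (f (fst p) - f (snd p))) + (\<Sum>p\<in>edges n E. f (snd p) * (f (snd p) - f (fst p)))
      = (\<Sum>p\<in>edges n E. (f (fst p) - f (snd p))\<^sup>2)"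
    by (simp add: sum.distrib[symmetric] power2_eq_square algebra_simps)
  ultimately show ?thesis by linarith
qed

lemma harmonic_props:
  fixes y :: "nat \<Rightarrow> real"
  assumes sg: "simple_graph n E" and Est: "E s t"
    and Ly: "\<forall>i<n. (\<Sum>k\<in>nbr n E i. y i - y k) = (if i = s then 1 else 0) - (if i = t then 1 else 0)"
    and Py: "\<forall>i<n. (\<Sum>k\<in>ccomp n E i. y k) = 0"
  shows "\<forall>v\<in>{0..<n}. y t \<le> y v \<and> y v \<le> y s"
    "(\<Sum>p\<in>edges n E. (y (fst p) - y (snd p))\<^sup>2) \<le> 2"
    "(\<Sum>v\<in>{0..<n}. y v) = 0"
proof -
  have st: "s < n" "t < n" and sneqt: "s \<noteq> t" and Ets: "E t s"
    using sg Est unfolding simple_graph_def by auto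
  let ?K = "ccomp n E s"
  have tK: "t \<in> ?K" using st Est unfolding ccomp_def by auto
  have sK: "s \<in> ?K" using st comp_self by auto
  have Kle: "\<forall>v\<in>?K. y v \<le> y s"
    by (rule harm_max[OF sg st(1) sK]) (use Ly in \<open>auto simp: ccomp_def\<close>)
  have Kge': "\<forall>v\<in>?K. - y v \<le> - y t"
  proof (rule harm_max[OF sg st(1) tK], intro ballI impI)
    fix v assume v: "v \<in> ?K" "v \<noteq> t"
    have "(\<Sum>k\<in>nbr n E v. - y v - - y k) = - (\<Sum>k\<in>nbr n E v. y v - y k)"
      by (simp add: sum_negf[symmetric])
    also have "\<dots> \<le> 0" using Ly v unfolding ccomp_def by auto
    finally show "(\<Sum>k\<in>nbr n E v. - y v - - y k) \<le> 0" .
  qed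
  then have Kge: "\<forall>v\<in>?K. y t \<le> y v" by auto
  have sumK: "(\<Sum>v\<in>?K. y v) = 0" using Py st by auto
  have cK: "0 < card ?K" using comp_card st by auto
  have ys: "0 \<le> y s"
  proof -
    have "(\<Sum>v\<in>?K. y v) \<le> (\<Sum>v\<in>?K. y s)" using Kle by (intro sum_mono) auto
    then have "0 \<le> real (card ?K) * y s" using sumK by simp
    then show ?thesis using cK by (simp add: zero_le_mult_iff)
  qed
  have yt: "y t \<le> 0"
  proof -
    have "(\<Sum>v\<in>?K. y t) \<le> (\<Sum>v\<in>?K. y v)" using Kge by (intro sum_mono) auto
    then have "real (card ?K) * y t \<le> 0" using sumK by simp
    then show ?thesis using cK by (simp add: mult_le_0_iff)
  qed
  have outside: "y v = 0" if v: "v < n" "v \<notin> ?K" for v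
  proof -
    let ?D = "ccomp n E v"
    have sD: "s \<notin> ?D"
    proof
      assume "s \<in> ?D"
      then have "?D = ?K" using comp_eq[OF sg] unfolding ccomp_def by auto
      then show False using v comp_self by auto
    qed
    have tD: "t \<notin> ?D"
    proof
      assume "t \<in> ?D"
      then have "?D = ccomp n E t" using comp_eq[OF sg] unfolding ccomp_def by auto
      also have "ccomp n E t = ?K" using comp_eq[OF sg, of s t] Est by auto
      finally show False using v comp_self by auto
    qed
    have const: "y w \<le> y u" if "w \<in> ?D" "u \<in> ?D" for w u
    proof -
      have "\<forall>w\<in>?D. y w \<le> y u"
        by (rule harm_max[OF sg v(1) that(2)]) (use Ly sD tD in \<open>auto simp: ccomp_def\<close>)
      then show ?thesis using that by auto
    qed
    have vD: "v \<in> ?D" using comp_self v by auto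
    have "\<forall>w\<in>?D. y w = y v" using const vD by (meson antisym)
    then have "(\<Sum>w\<in>?D. y w) = real (card ?D) * y v" by simp
    then have "real (card ?D) * y v = 0" using Py v by auto
    moreover have "0 < card ?D" using comp_card v(1) by blast
    ultimately show ?thesis by simp
  qed
  show "\<forall>v\<in>{0..<n}. y t \<le> y v \<and> y v \<le> y s"
  proof
    fix v assume "v \<in> {0..<n}"
    then show "y t \<le> y v \<and> y v \<le> y s"
      using Kle Kge outside ys yt by (cases "v \<in> ?K") auto
  qed
  have KV: "?K \<subseteq> {0..<n}" unfolding ccomp_def by auto
  have "(\<Sum>v\<in>{0..<n}. y v) = (\<Sum>v\<in>?K. y v) + (\<Sum>v\<in>{0..<n} - ?K. y v)"
    using KV by (metis finite_atLeastLessThan sum.subset_diff add.commute)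
  also have "(\<Sum>v\<in>{0..<n} - ?K. y v) = 0" using outside by (intro sum.neutral) auto
  finally show "(\<Sum>v\<in>{0..<n}. y v) = 0" using sumK by simp
  define Q where "Q = (\<Sum>p\<in>edges n E. (y (fst p) - y (snd p))\<^sup>2)"
  have "(\<Sum>i\<in>{0..<n}. y i * (\<Sum>k\<in>nbr n E i. y i - y k)) = Q / 2"
    unfolding Q_def by (rule quad_form[OF sg])
  moreover have "(\<Sum>i\<in>{0..<n}. y i * (\<Sum>k\<in>nbr n E i. y i - y k))
      = (\<Sum>i\<in>{0..<n}. y i * ((if i = s then 1 else 0) - (if i = t then 1 else 0)))"
    using Ly by (intro sum.cong) auto
  moreover have "\<dots> = y s - y t"
  proof -
    have e: "y i * ((if i = s then 1 else 0) - (if i = t then 1 else 0)) = (if i = s then y i else 0) - (if i = t then y i else 0)" for i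
      by simp
    show ?thesis unfolding e sum_subtractf using st by (simp add: sum.delta)
  qed
  ultimately have QR: "Q = 2 * (y s - y t)" by simp
  have "(\<Sum>p\<in>{(s, t), (t, s)}. (y (fst p) - y (snd p))\<^sup>2) \<le> Q"
    unfolding Q_def using st Est Ets by (intro sum_mono2 finite_edges) (auto simp: edges_def)
  moreover have "(\<Sum>p\<in>{(s, t), (t, s)}. (y (fst p) - y (snd p))\<^sup>2) = 2 * (y s - y t)\<^sup>2"
    using sneqt by (simp add: power2_commute)
  ultimately have "2 * (y s - y t)\<^sup>2 \<le> 2 * (y s - y t)" using QR by simp
  then have "(y s - y t) * (y s - y t) \<le> 1 * (y s - y t)" by (simp add: power2_eq_square)
  moreover have "0 \<le> y s - y t" using ys yt by simp
  ultimately have "y s - y t \<le> 1"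
  proof -
    assume a: "(y s - y t) * (y s - y t) \<le> 1 * (y s - y t)" "0 \<le> y s - y t"
    show ?thesis
    proof (rule ccontr)
      assume "\<not> y s - y t \<le> 1"
      then have g: "1 < y s - y t" by simp
      then have "1 * (y s - y t) < (y s - y t) * (y s - y t)" by (intro mult_strict_right_mono) auto
      then show False using a by simp
    qed
  qed
  then show "Q \<le> 2" using QR by simp
qed

definition projm :: "nat \<Rightarrow> (nat \<Rightarrow> nat \<Rightarrow> bool) \<Rightarrow> real mat" where
  "projm n E = mat n n (\<lambda>(i, j). if E\<^sup>*\<^sup>* i j then 1 / real (card (ccomp n E i)) else 0)"

lemma mult_entry:
  fixes A B :: "real mat"
  assumes "A \<in> carrier_mat n n" "B \<in> carrier_mat n n" "i < n" "j < n"
  shows "(A * B) $$ (i, j) = (\<Sum>k\<in>{0..<n}. A $$ (i, k) * B $$ (k, j))"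
  using assms by (simp add: scalar_prod_def)

lemma mv_entry:
  fixes A :: "real mat"
  assumes "A \<in> carrier_mat n n" "v \<in> carrier_vec n" "i < n"
  shows "(A *\<^sub>v v) $ i = (\<Sum>k\<in>{0..<n}. A $$ (i, k) * v $ k)"
  using assms by (simp add: scalar_prod_def)

lemma lap_carrier: "laplacian n E \<in> carrier_mat n n" unfolding laplacian_def by simp
lemma projm_carrier: "projm n E \<in> carrier_mat n n" unfolding projm_def by simp

lemma lap_entry: "i < n \<Longrightarrow> j < n \<Longrightarrow> laplacian n E $$ (i, j) =
   (if i = j then real (Defs.degree n E i) else if E i j then -1 else 0)"
  unfolding laplacian_def by simp

lemma projm_entry: "i < n \<Longrightarrow> j < n \<Longrightarrow> projm n E $$ (i, j) =
   (if E\<^sup>*\<^sup>* i j then 1 / real (card (ccomp n E i)) else 0)"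
  unfolding projm_def by simp

lemma lap_sum:
  fixes f :: "nat \<Rightarrow> real"
  assumes sg: "simple_graph n E" and i: "i < n"
  shows "(\<Sum>k\<in>{0..<n}. laplacian n E $$ (i, k) * f k) = (\<Sum>k\<in>nbr n E i. f i - f k)"
proof -
  have Eii: "\<not> E i i" using sg unfolding simple_graph_def by auto
  have "(\<Sum>k\<in>{0..<n}. laplacian n E $$ (i, k) * f k)
      = (\<Sum>k\<in>{0..<n}. (if k = i then real (Defs.degree n E i) * f i else 0) + (if E i k then - f k else 0))"
    using i Eii by (intro sum.cong refl) (auto simp: lap_entry)
  also have "\<dots> = real (Defs.degree n E i) * f i - (\<Sum>k\<in>nbr n E i. f k)"
    using i by (simp add: sum.distrib sum.If_cases nbr_def sum_negf Int_def conj_commute)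
  also have "\<dots> = (\<Sum>k\<in>nbr n E i. f i - f k)"
    by (simp add: sum_subtractf Defs.degree_def nbr_def)
  finally show ?thesis .
qed

lemma proj_sum:
  fixes f :: "nat \<Rightarrow> real"
  assumes sg: "simple_graph n E" and i: "i < n"
  shows "(\<Sum>k\<in>{0..<n}. projm n E $$ (i, k) * f k) = (\<Sum>k\<in>ccomp n E i. f k) / real (card (ccomp n E i))"
proof -
  have "(\<Sum>k\<in>{0..<n}. projm n E $$ (i, k) * f k)
      = (\<Sum>k\<in>{0..<n}. if k \<in> ccomp n E i then f k / real (card (ccomp n E i)) else 0)"
    using i by (intro sum.cong refl) (auto simp: projm_entry ccomp_def)
  also have "\<dots> = (\<Sum>k\<in>ccomp n E i. f k / real (card (ccomp n E i)))"
    by (subst sum.If_cases) (auto simp: ccomp_def Int_def intro!: sum.cong)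
  also have "\<dots> = (\<Sum>k\<in>ccomp n E i. f k) / real (card (ccomp n E i))"
    by (simp add: sum_divide_distrib)
  finally show ?thesis .
qed

lemma projm_comp:
  assumes sg: "simple_graph n E" and ij: "i < n" "j < n" and k: "k \<in> ccomp n E i"
  shows "projm n E $$ (k, j) = projm n E $$ (i, j)"
proof -
  have ik: "E\<^sup>*\<^sup>* i k" "k < n" using k unfolding ccomp_def by auto
  have ce: "ccomp n E k = ccomp n E i" using comp_eq[OF sg ik(1)] by simp
  have "E\<^sup>*\<^sup>* k j \<longleftrightarrow> E\<^sup>*\<^sup>* i j"
    using ik(1) reach_sym[OF sg ik(1)] by (meson rtranclp_trans)
  then show ?thesis using ij ik ce by (simp add: projm_entry)
qed

lemma projm_sym:
  assumes sg: "simple_graph n E" and ij: "i < n" "j < n"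
  shows "projm n E $$ (i, j) = projm n E $$ (j, i)"
proof (cases "E\<^sup>*\<^sup>* i j")
  case True
  then show ?thesis using ij reach_sym[OF sg True] comp_eq[OF sg True] by (simp add: projm_entry)
next
  case False
  then have "\<not> E\<^sup>*\<^sup>* j i" using reach_sym[OF sg] by blast
  then show ?thesis using ij False by (simp add: projm_entry)
qed

lemma lap_sym:
  assumes sg: "simple_graph n E" and ij: "i < n" "j < n"
  shows "laplacian n E $$ (i, j) = laplacian n E $$ (j, i)"
  using sg ij unfolding simple_graph_def by (auto simp: lap_entry)

lemma LP_zero:
  assumes sg: "simple_graph n E"
  shows "laplacian n E * projm n E = 0\<^sub>m n n"
proof (rule mat_eqI_n[of _ n])
  fix i j assume ij: "i < n" "j < n"
  have "(laplacian n E * projm n E) $$ (i, j) = (\<Sum>k\<in>{0..<n}. laplacian n E $$ (i, k) * projm n E $$ (k, j))"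
    using ij by (intro mult_entry lap_carrier projm_carrier)
  also have "\<dots> = (\<Sum>k\<in>nbr n E i. projm n E $$ (i, j) - projm n E $$ (k, j))"
    by (rule lap_sum[OF sg ij(1)])
  also have "\<dots> = 0"
  proof (intro sum.neutral ballI)
    fix k assume "k \<in> nbr n E i"
    then have "k \<in> ccomp n E i" using ij unfolding nbr_def ccomp_def by auto
    then show "projm n E $$ (i, j) - projm n E $$ (k, j) = 0" using projm_comp[OF sg ij] by simp
  qed
  finally show "(laplacian n E * projm n E) $$ (i, j) = 0\<^sub>m n n $$ (i, j)" using ij by simp
qed (auto intro: mult_carrier_mat lap_carrier projm_carrier)

lemma PL_zero:
  assumes sg: "simple_graph n E"
  shows "projm n E * laplacian n E = 0\<^sub>m n n"
proof (rule mat_eqI_n[of _ n])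
  fix i j assume ij: "i < n" "j < n"
  have "(projm n E * laplacian n E) $$ (i, j) = (\<Sum>k\<in>{0..<n}. projm n E $$ (i, k) * laplacian n E $$ (k, j))"
    using ij by (intro mult_entry lap_carrier projm_carrier)
  also have "\<dots> = (\<Sum>k\<in>{0..<n}. laplacian n E $$ (j, k) * projm n E $$ (k, i))"
    using ij by (intro sum.cong refl) (simp add: projm_sym[OF sg] lap_sym[OF sg])
  also have "\<dots> = (laplacian n E * projm n E) $$ (j, i)"
    using ij by (intro mult_entry[symmetric] lap_carrier projm_carrier)
  also have "\<dots> = 0" using LP_zero[OF sg] ij by simp
  finally show "(projm n E * laplacian n E) $$ (i, j) = 0\<^sub>m n n $$ (i, j)" using ij by simp
qed (auto intro: mult_carrier_mat lap_carrier projm_carrier)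

lemma PP_eq:
  assumes sg: "simple_graph n E"
  shows "projm n E * projm n E = projm n E"
proof (rule mat_eqI_n[of _ n])
  fix i j assume ij: "i < n" "j < n"
  have "(projm n E * projm n E) $$ (i, j) = (\<Sum>k\<in>{0..<n}. projm n E $$ (i, k) * projm n E $$ (k, j))"
    using ij by (intro mult_entry projm_carrier)
  also have "\<dots> = (\<Sum>k\<in>ccomp n E i. projm n E $$ (k, j)) / real (card (ccomp n E i))"
    by (rule proj_sum[OF sg ij(1)])
  also have "(\<Sum>k\<in>ccomp n E i. projm n E $$ (k, j)) = (\<Sum>k\<in>ccomp n E i. projm n E $$ (i, j))"
    using projm_comp[OF sg ij] by (intro sum.cong) auto
  also have "\<dots> / real (card (ccomp n E i)) = projm n E $$ (i, j)"
    using comp_card[OF ij(1), of E] by simp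
  finally show "(projm n E * projm n E) $$ (i, j) = projm n E $$ (i, j)" .
qed (auto intro: mult_carrier_mat projm_carrier)

lemma lap_transpose:
  assumes sg: "simple_graph n E"
  shows "transpose_mat (laplacian n E) = laplacian n E"
proof (rule mat_eqI_n[of _ n])
  fix i j assume ij: "i < n" "j < n"
  have d: "dim_row (laplacian n E) = n" "dim_col (laplacian n E) = n" using lap_carrier[of n E] by auto
  show "transpose_mat (laplacian n E) $$ (i, j) = laplacian n E $$ (i, j)"
    using ij d lap_sym[OF sg ij] by simp
qed (use lap_carrier[of n E] in auto)

lemma projm_transpose:
  assumes sg: "simple_graph n E"
  shows "transpose_mat (projm n E) = projm n E"
proof (rule mat_eqI_n[of _ n])
  fix i j assume ij: "i < n" "j < n"
  have d: "dim_row (projm n E) = n" "dim_col (projm n E) = n" using projm_carrier[of n E] by auto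
  show "transpose_mat (projm n E) $$ (i, j) = projm n E $$ (i, j)"
    using ij d projm_sym[OF sg ij] by simp
qed (use projm_carrier[of n E] in auto)

lemma Lv_entry:
  assumes sg: "simple_graph n E" and v: "v \<in> carrier_vec n" and i: "i < n"
  shows "(laplacian n E *\<^sub>v v) $ i = (\<Sum>k\<in>nbr n E i. v $ i - v $ k)"
  using mv_entry[OF lap_carrier v i] lap_sum[OF sg i, of "\<lambda>k. v $ k"] by simp

lemma Pv_entry:
  assumes sg: "simple_graph n E" and v: "v \<in> carrier_vec n" and i: "i < n"
  shows "(projm n E *\<^sub>v v) $ i = (\<Sum>k\<in>ccomp n E i. v $ k) / real (card (ccomp n E i))"
  using mv_entry[OF projm_carrier v i] proj_sum[OF sg i, of "\<lambda>k. v $ k"] by simp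

lemma self_scalar_nn: "(w :: real vec) \<bullet> w = (\<Sum>i\<in>{0..<dim_vec w}. (w $ i)\<^sup>2)"
  unfolding scalar_prod_def by (simp add: power2_eq_square)

lemma LP_inv:
  assumes sg: "simple_graph n E"
  shows "\<exists>Q\<in>carrier_mat n n. Q * (laplacian n E + projm n E) = 1\<^sub>m n \<and> (laplacian n E + projm n E) * Q = 1\<^sub>m n"
proof -
  let ?L = "laplacian n E" and ?P = "projm n E"
  let ?M = "?L + ?P"
  have L: "?L \<in> carrier_mat n n" and P: "?P \<in> carrier_mat n n" by (rule lap_carrier, rule projm_carrier)
  have M: "?M \<in> carrier_mat n n" using P by simp
  have inj: "v = 0\<^sub>v n" if v: "v \<in> carrier_vec n" and Mv: "?M *\<^sub>v v = 0\<^sub>v n" for v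
  proof -
    define f where "f i = v $ i" for i
    define w where "w = ?P *\<^sub>v v"
    have w: "w \<in> carrier_vec n" unfolding w_def using P v by simp
    have Lv: "?L *\<^sub>v v \<in> carrier_vec n" using L v by simp
    have "0 = v \<bullet> (?M *\<^sub>v v)" using Mv v by simp
    also have "\<dots> = v \<bullet> (?L *\<^sub>v v) + v \<bullet> w"
      unfolding w_def add_mult_distrib_mat_vec[OF L P v] by (rule scalar_prod_add_distrib[OF v Lv]) (use P v in simp)
    finally have sum0: "v \<bullet> (?L *\<^sub>v v) + v \<bullet> w = 0" by simp
    have "v \<bullet> (?L *\<^sub>v v) = (\<Sum>i\<in>{0..<n}. f i * (\<Sum>k\<in>nbr n E i. f i - f k))"
      unfolding scalar_prod_def proof (intro sum.cong refl)
      fix x assume "x \<in> {0..<n}"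
      then have x: "x < n" by simp
      show "v $ x * (?L *\<^sub>v v) $ x = f x * (\<Sum>k\<in>nbr n E x. f x - f k)"
        using Lv_entry[OF sg v x] unfolding f_def by simp
    qed (use L in simp)
    also have "\<dots> = (\<Sum>p\<in>edges n E. (f (fst p) - f (snd p))\<^sup>2) / 2" by (rule quad_form[OF sg])
    finally have vL: "v \<bullet> (?L *\<^sub>v v) = (\<Sum>p\<in>edges n E. (f (fst p) - f (snd p))\<^sup>2) / 2" .
    have "v \<bullet> w = v \<bullet> ((?P * ?P) *\<^sub>v v)" unfolding w_def PP_eq[OF sg] ..
    also have "\<dots> = v \<bullet> (?P *\<^sub>v w)" unfolding w_def using P v by simp
    also have "\<dots> = (transpose_mat ?P *\<^sub>v v) \<bullet> w" by (rule transpose_vec_mult_scalar[OF P w v, symmetric])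
    also have "\<dots> = w \<bullet> w" unfolding projm_transpose[OF sg] w_def ..
    finally have vw: "v \<bullet> w = w \<bullet> w" .
    have ww: "w \<bullet> w = (\<Sum>i\<in>{0..<n}. (w $ i)\<^sup>2)" using self_scalar_nn[of w] w by simp
    have Qnn: "0 \<le> (\<Sum>p\<in>edges n E. (f (fst p) - f (snd p))\<^sup>2)" by (intro sum_nonneg) auto
    have wnn: "0 \<le> (\<Sum>i\<in>{0..<n}. (w $ i)\<^sup>2)" by (intro sum_nonneg) auto
    have Q0: "(\<Sum>p\<in>edges n E. (f (fst p) - f (snd p))\<^sup>2) = 0" and w0: "(\<Sum>i\<in>{0..<n}. (w $ i)\<^sup>2) = 0"
      using sum0 vL vw ww Qnn wnn by linarith+
    have edge_eq: "f a = f b" if "E a b" for a b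
    proof -
      have "(a, b) \<in> edges n E" using that sg unfolding simple_graph_def edges_def by auto
      then show ?thesis using Q0 finite_edges[of n E] by (subst (asm) sum_nonneg_eq_0_iff) auto
    qed
    have reach_eq: "E\<^sup>*\<^sup>* a b \<Longrightarrow> f b = f a" for a b
      by (induction rule: rtranclp_induct) (use edge_eq in auto)
    have wi: "w $ i = f i" if i: "i < n" for i
    proof -
      have "w $ i = (\<Sum>k\<in>{0..<n}. ?P $$ (i, k) * f k)" unfolding w_def f_def by (rule mv_entry[OF P v i])
      also have "\<dots> = (\<Sum>k\<in>ccomp n E i. f k) / real (card (ccomp n E i))" by (rule proj_sum[OF sg i])
      also have "(\<Sum>k\<in>ccomp n E i. f k) = (\<Sum>k\<in>ccomp n E i. f i)"
        by (intro sum.cong refl) (auto simp: ccomp_def reach_eq)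
      also have "\<dots> / real (card (ccomp n E i)) = f i" using comp_card[OF i, of E] by simp
      finally show ?thesis .
    qed
    have "\<forall>i\<in>{0..<n}. (w $ i)\<^sup>2 = 0" using w0 by (subst sum_nonneg_eq_0_iff[symmetric]) auto
    then have "\<forall>i<n. f i = 0" using wi by auto
    then show "v = 0\<^sub>v n" using v unfolding f_def by (intro eq_vecI) auto
  qed
  have "det ?M \<noteq> 0"
    unfolding det_0_iff_vec_prod_zero[OF M] using inj by blast
  from det_non_zero_imp_unit[OF M this, of undefined]
  show ?thesis unfolding Units_def ring_mat_def by auto
qed

theorem theorem5p4:
  "\<exists>C::real. C > 0 \<and>
     (\<forall>(n::nat) (E::nat \<Rightarrow> nat \<Rightarrow> bool) s t.
        simple_graph n E \<longrightarrow> E s t \<longrightarrow>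
        (\<exists>S. S \<subseteq> {0..<n} \<and> s \<in> S \<and> t \<notin> S \<and>
             (biharmonic_dist n E s t)\<^sup>2
               \<le> C * real (max_degree n E) / (iso_ratio n E S)\<^sup>2))"
proof (intro exI[of _ 64] conjI allI impI)
  show "(0::real) < 64" by simp
  fix n :: nat and E :: "nat \<Rightarrow> nat \<Rightarrow> bool" and s t :: nat
  assume sg: "simple_graph n E" and Est: "E s t"
  have st: "s < n" "t < n" using sg Est unfolding simple_graph_def by auto
  let ?L = "laplacian n E" and ?P = "projm n E"
  have L: "?L \<in> carrier_mat n n" and P: "?P \<in> carrier_mat n n" by (rule lap_carrier, rule projm_carrier)
  obtain Q where Q: "Q \<in> carrier_mat n n" and QL: "Q * (?L + ?P) = 1\<^sub>m n" and QR: "(?L + ?P) * Q = 1\<^sub>m n"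
    using LP_inv[OF sg] by blast
  define X where "X = Q - ?P"
  have X: "X \<in> carrier_mat n n" unfolding X_def using P by (intro minus_carrier_mat)
  note pc = penrose_constr[OF L P Q LP_zero[OF sg] PL_zero[OF sg] PP_eq[OF sg] QL QR lap_transpose[OF sg] projm_transpose[OF sg], folded X_def]
  have pinv: "pseudo_inverse n ?L = X"
    unfolding pseudo_inverse_def
  proof (rule the_equality)
    show "X \<in> carrier_mat n n \<and> ?L * X * ?L = ?L \<and> X * ?L * X = X \<and>
      transpose_mat (?L * X) = ?L * X \<and> transpose_mat (X * ?L) = X * ?L"
      using X pc by auto
  next
    fix Y assume "Y \<in> carrier_mat n n \<and> ?L * Y * ?L = ?L \<and> Y * ?L * Y = Y \<and>
      transpose_mat (?L * Y) = ?L * Y \<and> transpose_mat (Y * ?L) = Y * ?L"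
    then show "Y = X" using penrose_unique[OF L _ X, of Y] pc by auto
  qed
  define x :: "real vec" where "x = unit_vec n s - unit_vec n t"
  have x: "x \<in> carrier_vec n" unfolding x_def by simp
  have xi: "x $ i = (if i = s then 1 else 0) - (if i = t then 1 else 0)" if "i < n" for i
    unfolding x_def using that st by auto
  define y where "y = X *\<^sub>v x"
  have y: "y \<in> carrier_vec n" unfolding y_def using X x by simp
  have Px: "?P *\<^sub>v x = 0\<^sub>v n"
  proof (rule eq_vecI)
    fix i assume "i < dim_vec (0\<^sub>v n :: real vec)"
    then have i: "i < n" by simp
    have "(\<Sum>k\<in>ccomp n E i. x $ k) = (\<Sum>k\<in>ccomp n E i. (if k = s then 1 else 0) - (if k = t then 1 else 0))"
      using xi by (intro sum.cong refl) (auto simp: ccomp_def)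
    also have "\<dots> = (if s \<in> ccomp n E i then 1 else 0) - (if t \<in> ccomp n E i then 1 else 0)"
      by (simp add: sum_subtractf sum.delta comp_fin)
    also have "\<dots> = 0"
    proof -
      have "E\<^sup>*\<^sup>* s t" "E\<^sup>*\<^sup>* t s" using Est reach_sym[OF sg] by auto
      then have "s \<in> ccomp n E i \<longleftrightarrow> t \<in> ccomp n E i" using st unfolding ccomp_def by (auto intro: rtranclp_trans)
      then show ?thesis by simp
    qed
    finally show "(?P *\<^sub>v x) $ i = 0\<^sub>v n $ i" using Pv_entry[OF sg x i] i by simp
  qed (use P in simp)
  have Ly: "?L *\<^sub>v y = x"
  proof -
    have "?L *\<^sub>v y = (?L * X) *\<^sub>v x" unfolding y_def using L X x by simp
    also have "\<dots> = (1\<^sub>m n - ?P) *\<^sub>v x" using pc by simp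
    also have "\<dots> = x - ?P *\<^sub>v x" using minus_mult_distrib_mat_vec[OF one_carrier_mat P x] x by simp
    also have "\<dots> = x" using Px x by simp
    finally show ?thesis .
  qed
  have Py: "?P *\<^sub>v y = 0\<^sub>v n"
  proof -
    have "?P *\<^sub>v y = (?P * X) *\<^sub>v x" unfolding y_def using P X x by simp
    also have "\<dots> = 0\<^sub>m n n *\<^sub>v x" using pc by simp
    also have "\<dots> = 0\<^sub>v n" using x by (intro eq_vecI) (auto simp: scalar_prod_def)
    finally show ?thesis .
  qed
  define yf where "yf i = y $ i" for i
  have Lyf: "\<forall>i<n. (\<Sum>k\<in>nbr n E i. yf i - yf k) = (if i = s then 1 else 0) - (if i = t then 1 else 0)"
    using Lv_entry[OF sg y] Ly xi unfolding yf_def by auto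
  have Pyf: "\<forall>i<n. (\<Sum>k\<in>ccomp n E i. yf k) = 0"
  proof (intro allI impI)
    fix i assume i: "i < n"
    have "(\<Sum>k\<in>ccomp n E i. yf k) / real (card (ccomp n E i)) = 0"
      using Pv_entry[OF sg y i] Py i unfolding yf_def by simp
    then show "(\<Sum>k\<in>ccomp n E i. yf k) = 0" using comp_card[OF i, of E] by simp
  qed
  note hp = harmonic_props[OF sg Est Lyf Pyf]
  have B: "(biharmonic_dist n E s t)\<^sup>2 = (\<Sum>i\<in>{0..<n}. (yf i)\<^sup>2)"
  proof -
    have "x \<bullet> ((X * X) *\<^sub>v x) = x \<bullet> (X *\<^sub>v y)" unfolding y_def using X x by simp
    also have "\<dots> = (transpose_mat X *\<^sub>v x) \<bullet> y" by (rule transpose_vec_mult_scalar[OF X y x, symmetric])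
    also have "\<dots> = y \<bullet> y" unfolding pc(7) y_def ..
    also have "\<dots> = (\<Sum>i\<in>{0..<n}. (yf i)\<^sup>2)" using self_scalar_nn[of y] y unfolding yf_def by simp
    finally have e: "x \<bullet> ((X * X) *\<^sub>v x) = (\<Sum>i\<in>{0..<n}. (yf i)\<^sup>2)" .
    have "biharmonic_dist n E s t = sqrt (x \<bullet> ((X * X) *\<^sub>v x))"
      unfolding biharmonic_dist_def Let_def pinv x_def ..
    then show ?thesis using e by (simp add: sum_nonneg)
  qed
  obtain S where "S \<subseteq> {0..<n}" "s \<in> S" "t \<notin> S"
    "(\<Sum>v\<in>{0..<n}. (yf v)\<^sup>2) \<le> 64 * real (max_degree n E) / (iso_ratio n E S)\<^sup>2"
    using analytic_main[OF sg Est hp] by blast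
  then show "\<exists>S. S \<subseteq> {0..<n} \<and> s \<in> S \<and> t \<notin> S \<and>
             (biharmonic_dist n E s t)\<^sup>2 \<le> 64 * real (max_degree n E) / (iso_ratio n E S)\<^sup>2"
    using B by auto
qed

end
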